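(* Let $I=(f_1,\dots,f_n)\subset R=\mathbb{K}[x_1,\dots,x_n]$ be a complete intersection such that for every $d$-dimensional simplicial complex $\Delta$ on vertex set $[n]$, $f_i\in I_\Delta$ for every $i>d+1$. Then $f_1,\dots,f_{d+1}$ is a system of parameters for $I_\Delta$ for every $d$-dimensional simplicial complex $\Delta$ on $[n]$.
   Context: $I_\Delta$ is the Stanley–Reisner ideal of $\Delta$. For a homogeneous ideal $I'$ with $\dim R/I'=d+1$, a system of parameters is a sequence of homogeneous elements $g_1,\dots,g_{d+1}$ such that $R/(I'+(g_1,\dots,g_{d+1}))$ is a finite-dimensional $\mathbb{K}$-vector space. *)

theory Defs
  imports "HOL-Library.Poly_Mapping" "HOL-Library.Cardinality"
begin

text \<open>Polynomial ring K[x_v : v in 'v] for a finite variable type 'v (n = CARD('v)):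
  polynomials are finitely supported maps from monomials (exponent vectors 'v =>0 nat)
  to coefficients.  The vertex set [n] of the simplicial complexes is identified with
  the variable type 'v (vertex v corresponds to the variable x_v).\<close>

type_synonym ('v, 'k) mpoly = "('v \<Rightarrow>\<^sub>0 nat) \<Rightarrow>\<^sub>0 'k"

definition is_ideal :: "('v, 'k::comm_ring_1) mpoly set \<Rightarrow> bool" where
  "is_ideal J \<longleftrightarrow> 0 \<in> J \<and> (\<forall>a\<in>J. \<forall>b\<in>J. a + b \<in> J) \<and> (\<forall>r. \<forall>a\<in>J. r * a \<in> J)"

definition ideal_gen :: "('v, 'k::comm_ring_1) mpoly set \<Rightarrow> ('v, 'k) mpoly set" where
  "ideal_gen S = \<Inter>{J. is_ideal J \<and> S \<subseteq> J}"

definition const_poly :: "'k::comm_ring_1 \<Rightarrow> ('v, 'k) mpoly" where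
  "const_poly c = Poly_Mapping.single 0 c"

definition mdeg :: "('v \<Rightarrow>\<^sub>0 nat) \<Rightarrow> nat" where
  "mdeg m = (\<Sum>v\<in>Poly_Mapping.keys m. Poly_Mapping.lookup m v)"

definition homogeneous :: "('v, 'k::comm_ring_1) mpoly \<Rightarrow> bool" where
  "homogeneous p \<longleftrightarrow> (\<exists>k. \<forall>m\<in>Poly_Mapping.keys p. mdeg m = k)"

text \<open>R/J is a finite-dimensional K-vector space: a finite set B of polynomials whose
  classes span R/J over K.\<close>
definition fin_dim_quotient :: "('v, 'k::field) mpoly set \<Rightarrow> bool" where
  "fin_dim_quotient J \<longleftrightarrow>
     (\<exists>B. finite B \<and> (\<forall>p. \<exists>c. p - (\<Sum>b\<in>B. const_poly (c b) * b) \<in> J))"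

text \<open>f_1,...,f_m (indices 1..m) is a regular sequence of homogeneous elements:
  each f_i is a non-zero-divisor on R/(f_1,...,f_{i-1}), and (f_1,...,f_m) is proper.\<close>
definition regular_sequence :: "(nat \<Rightarrow> ('v, 'k::field) mpoly) \<Rightarrow> nat \<Rightarrow> bool" where
  "regular_sequence f m \<longleftrightarrow>
     ideal_gen (f ` {1..m}) \<noteq> UNIV \<and>
     (\<forall>i\<in>{1..m}. \<forall>g. f i * g \<in> ideal_gen (f ` {1..<i}) \<longrightarrow> g \<in> ideal_gen (f ` {1..<i}))"

definition complete_intersection :: "(nat \<Rightarrow> ('v::finite, 'k::field) mpoly) \<Rightarrow> bool" where
  "complete_intersection f \<longleftrightarrow>
     (\<forall>i\<in>{1..CARD('v)}. homogeneous (f i)) \<and> regular_sequence f CARD('v)"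

text \<open>Simplicial complex on the vertex set 'v (every vertex is a face).\<close>
definition simplicial_complex :: "'v::finite set set \<Rightarrow> bool" where
  "simplicial_complex \<Delta> \<longleftrightarrow> {} \<in> \<Delta> \<and> (\<forall>v. {v} \<in> \<Delta>) \<and>
     (\<forall>F\<in>\<Delta>. \<forall>G. G \<subseteq> F \<longrightarrow> G \<in> \<Delta>)"

definition complex_dim :: "'v::finite set set \<Rightarrow> nat \<Rightarrow> bool" where
  "complex_dim \<Delta> d \<longleftrightarrow> (\<exists>F\<in>\<Delta>. card F = d + 1) \<and> (\<forall>F\<in>\<Delta>. card F \<le> d + 1)"

definition sqfree_monomial :: "'v set \<Rightarrow> ('v, 'k::comm_ring_1) mpoly" where
  "sqfree_monomial F = Poly_Mapping.single (\<Sum>v\<in>F. Poly_Mapping.single v 1) 1"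

definition stanley_reisner :: "'v::finite set set \<Rightarrow> ('v, 'k::comm_ring_1) mpoly set" where
  "stanley_reisner \<Delta> = ideal_gen {sqfree_monomial F | F. F \<notin> \<Delta>}"

definition system_of_parameters :: "('v, 'k::field) mpoly set \<Rightarrow> (nat \<Rightarrow> ('v, 'k) mpoly) \<Rightarrow> nat \<Rightarrow> bool" where
  "system_of_parameters J g m \<longleftrightarrow>
     (\<forall>i\<in>{1..m}. homogeneous (g i)) \<and> fin_dim_quotient (ideal_gen (J \<union> g ` {1..m}))"

end

theory Submission
  imports Defs "HOL-Computational_Algebra.Formal_Power_Series"
begin

context vector_space begin

lemma indep_union:
  assumes "finite X" "finite Y" "independent X" "independent Y" "span X \<inter> span Y \<subseteq> {0}"
  shows "independent (X \<union> Y)" "X \<inter> Y = {}"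
proof -
  show disj: "X \<inter> Y = {}"
  proof (rule ccontr)
    assume "X \<inter> Y \<noteq> {}"
    then obtain x where "x \<in> X" "x \<in> Y" by auto
    then have "x \<in> span X \<inter> span Y" using span_base by auto
    then have "x = 0" using assms(5) by auto
    then show False using \<open>x \<in> X\<close> assms(3) dependent_zero by auto
  qed
  show "independent (X \<union> Y)"
  proof (rule independent_if_scalars_zero)
    show "finite (X \<union> Y)" using assms by auto
    fix u x assume s: "(\<Sum>x\<in>X \<union> Y. u x *s x) = 0" and x: "x \<in> X \<union> Y"
    have "(\<Sum>x\<in>X \<union> Y. u x *s x) = (\<Sum>x\<in>X. u x *s x) + (\<Sum>x\<in>Y. u x *s x)"
      using disj assms by (simp add: sum.union_disjoint)
    then have e: "(\<Sum>x\<in>X. u x *s x) = - (\<Sum>x\<in>Y. u x *s x)" using s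
      by (simp add: eq_neg_iff_add_eq_0)
    have "(\<Sum>x\<in>X. u x *s x) \<in> span X" by (intro span_sum span_scale span_base) auto
    moreover have "(\<Sum>x\<in>X. u x *s x) \<in> span Y" unfolding e
      by (intro span_neg span_sum span_scale span_base) auto
    ultimately have z: "(\<Sum>x\<in>X. u x *s x) = 0" using assms(5) by auto
    then have zy: "(\<Sum>x\<in>Y. u x *s x) = 0" using e by simp
    show "u x = 0"
      using x independentD[OF assms(3) assms(1) order_refl z] independentD[OF assms(4) assms(2) order_refl zy]
      by auto
  qed
qed

lemma span_inter_indep:
  assumes "finite X" "finite Y" "independent (X \<union> Y)" "X \<inter> Y = {}"
  shows "span X \<inter> span Y \<subseteq> {0}"
proof
  fix z assume "z \<in> span X \<inter> span Y"
  then have "z \<in> range (\<lambda>u. \<Sum>v\<in>X. u v *s v)" "z \<in> range (\<lambda>u. \<Sum>v\<in>Y. u v *s v)"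
    using span_finite[OF assms(1)] span_finite[OF assms(2)] by auto
  then obtain a b where a: "z = (\<Sum>v\<in>X. a v *s v)" and b: "z = (\<Sum>v\<in>Y. b v *s v)"
    by blast
  define u where "u v = (if v \<in> X then a v else - b v)" for v
  have "(\<Sum>v\<in>X \<union> Y. u v *s v) = (\<Sum>v\<in>X. u v *s v) + (\<Sum>v\<in>Y. u v *s v)"
    using assms by (simp add: sum.union_disjoint)
  also have "(\<Sum>v\<in>X. u v *s v) = z" unfolding a u_def by simp
  also have "(\<Sum>v\<in>Y. u v *s v) = - z" unfolding b u_def using assms(4)
    by (auto simp: sum_negf[symmetric] intro!: sum.cong)
  finally have "(\<Sum>v\<in>X \<union> Y. u v *s v) = 0" by simp
  then have "\<forall>v\<in>X. u v = 0" using independentD[OF assms(3)] assms(1,2) by blast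
  then have "\<forall>v\<in>X. a v = 0" unfolding u_def by auto
  then show "z \<in> {0}" unfolding a by simp
qed

lemma fin_indep:
  assumes "finite F" "S \<subseteq> span F" "independent B" "B \<subseteq> S"
  shows "finite B"
  using independent_span_bound[OF assms(1,3)] assms span_mono span_span by blast

lemma dim_sub:
  assumes "S \<subseteq> T" "subspace S" "T \<subseteq> span F" "finite F"
  shows "dim S \<le> dim T" "dim S = dim T \<Longrightarrow> T \<subseteq> S"
proof -
  obtain A where A: "A \<subseteq> S" "independent A" "S \<subseteq> span A" "card A = dim S"
    using basis_exists by blast
  obtain B where B: "A \<subseteq> B" "B \<subseteq> T" "independent B" "T \<subseteq> span B"
    using maximal_independent_subset_extend[of A T] A assms by blast
  have fB: "finite B" using fin_indep[OF assms(4,3) B(3,2)] .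
  have cB: "card B = dim T" using basis_card_eq_dim B by blast
  show "dim S \<le> dim T" using card_mono[OF fB B(1)] A cB by simp
  assume "dim S = dim T"
  then have "A = B" using card_subset_eq[OF fB B(1)] A cB by simp
  then show "T \<subseteq> S" using B A span_minimal[of A S] assms(2) by blast
qed

lemma dim_formula:
  assumes sJk: "subspace Jk" and sRm: "subspace Rm" and sJm: "subspace Jm" and JR: "Jm \<subseteq> Rm"
    and fF: "finite F" "Rm \<subseteq> span F" and fG: "finite G" "Jk \<subseteq> span G"
    and lin: "Vector_Spaces.linear scale scale \<phi>" and im: "\<phi> ` Jm \<subseteq> Jk"
    and pre: "\<And>g. g \<in> Rm \<Longrightarrow> \<phi> g \<in> Jk \<Longrightarrow> g \<in> Jm"
  shows "dim (span (Jk \<union> \<phi> ` Rm)) + dim Jm = dim Jk + dim Rm"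
proof -
  interpret L: Vector_Spaces.linear scale scale \<phi> by fact
  obtain A where A: "A \<subseteq> Jm" "independent A" "Jm \<subseteq> span A" "card A = dim Jm"
    using basis_exists by blast
  obtain B where B: "A \<subseteq> B" "B \<subseteq> Rm" "independent B" "Rm \<subseteq> span B"
    using maximal_independent_subset_extend[of A Rm] A JR by blast
  have fB: "finite B" using fin_indep[OF fF B(3,2)] .
  have cB: "card B = dim Rm" using basis_card_eq_dim B by blast
  obtain D where D: "D \<subseteq> Jk" "independent D" "Jk \<subseteq> span D" "card D = dim Jk"
    using basis_exists by blast
  have fD: "finite D" using fin_indep[OF fG D(2,1)] .
  define C where "C = B - A"
  have fA: "finite A" using fB B(1) finite_subset by blast
  have fC: "finite C" using fB C_def by auto
  have BAC: "B = A \<union> C" "A \<inter> C = {}" using B(1) C_def by auto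
  have AC0: "span A \<inter> span C \<subseteq> {0}"
    using span_inter_indep[OF fA fC] BAC B(3) by auto
  have spA: "span A \<subseteq> Jm" using span_minimal[OF A(1) sJm] .
  have CR: "span C \<subseteq> Rm" using span_minimal[of C Rm] sRm B(2) C_def by auto
  have ker: "x = 0" if "x \<in> span C" "\<phi> x \<in> Jk" for x
  proof -
    have "x \<in> Jm" using pre that CR by auto
    then have "x \<in> span A" using A by auto
    then show ?thesis using AC0 that by auto
  qed
  have inj: "inj_on \<phi> (span C)"
    unfolding L.inj_on_iff_eq_0[OF subspace_span]
    using ker subspace_0[OF sJk] by auto
  have indC: "independent (\<phi> ` C)"
    using L.independent_injective_image[OF _ inj] independent_mono[OF B(3)] C_def by auto
  have cC: "card (\<phi> ` C) = card C"
    using card_image inj_on_subset[OF inj span_superset] by blast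
  have DC0: "span D \<inter> span (\<phi> ` C) \<subseteq> {0}"
  proof
    fix y assume y: "y \<in> span D \<inter> span (\<phi> ` C)"
    then obtain x where x: "x \<in> span C" "y = \<phi> x" using L.span_image by auto
    have "y \<in> Jk" using y span_minimal[OF D(1) sJk] by auto
    then have "x = 0" using ker x by auto
    then show "y \<in> {0}" using x L.zero by auto
  qed
  have fpC: "finite (\<phi> ` C)" using fC by auto
  note U = indep_union[OF fD fpC D(2) indC DC0]
  have sp: "span (Jk \<union> \<phi> ` Rm) = span (D \<union> \<phi> ` C)"
  proof (rule span_eq[THEN iffD2], rule conjI)
    show "Jk \<union> \<phi> ` Rm \<subseteq> span (D \<union> \<phi> ` C)"
    proof
      fix z assume "z \<in> Jk \<union> \<phi> ` Rm"
      then show "z \<in> span (D \<union> \<phi> ` C)"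
      proof
        assume "z \<in> Jk" then show ?thesis using D(3) span_mono[of D "D \<union> \<phi> ` C"] by auto
      next
        assume "z \<in> \<phi> ` Rm"
        then obtain g where g: "g \<in> Rm" "z = \<phi> g" by auto
        then have "g \<in> span (A \<union> C)" using B(4) BAC by auto
        then obtain a c where ac: "a \<in> span A" "c \<in> span C" "g = a + c" unfolding span_Un by auto
        have "\<phi> a \<in> Jk" using spA ac im by auto
        then have "\<phi> a \<in> span D" using D by auto
        moreover have "\<phi> c \<in> span (\<phi> ` C)" using L.span_image ac by auto
        ultimately have "\<phi> a + \<phi> c \<in> span (D \<union> \<phi> ` C)" unfolding span_Un by auto
        then show ?thesis using g ac L.add by simp
      qed
    qed
    show "D \<union> \<phi> ` C \<subseteq> span (Jk \<union> \<phi> ` Rm)"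
      using D(1) B(2) C_def span_superset by blast
  qed
  have "dim (span (Jk \<union> \<phi> ` Rm)) = card (D \<union> \<phi> ` C)"
    unfolding sp dim_span using dim_eq_card_independent[OF U(1)] .
  also have "\<dots> = card D + card C" using card_Un_disjoint[OF fD fpC U(2)] cC by simp
  finally show ?thesis using D(4) A(4) cB BAC fA fC card_Un_disjoint[OF fA fC BAC(2)] by simp
qed

end

abbreviation lookup where "lookup \<equiv> Poly_Mapping.lookup"
abbreviation keys where "keys \<equiv> Poly_Mapping.keys"
abbreviation single where "single \<equiv> Poly_Mapping.single"

definition sc :: "'k::field \<Rightarrow> ('v, 'k) mpoly \<Rightarrow> ('v, 'k) mpoly" where
  "sc c p = const_poly c * p"

lemma const_poly_add: "const_poly (a + b) = const_poly a + const_poly b"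
  unfolding const_poly_def by (simp add: single_add)

lemma const_poly_mult: "const_poly (a * b) = const_poly a * (const_poly b :: ('v, 'k::comm_ring_1) mpoly)"
  unfolding const_poly_def by (simp add: mult_single)

lemma const_poly_one[simp]: "const_poly 1 = 1"
  unfolding const_poly_def by simp

global_interpretation V: vector_space "sc :: 'k::field \<Rightarrow> ('v, 'k) mpoly \<Rightarrow> _"
  by unfold_locales (auto simp: sc_def distrib_left distrib_right const_poly_add const_poly_mult mult.assoc)

lemma lookup_sc: "lookup (sc c p) m = c * lookup p m"
  unfolding sc_def const_poly_def mult_map_scale_conv_mult[symmetric]
  by (simp add: map.rep_eq when_def)

lemma keys_sc: "keys (sc c p) \<subseteq> keys p"
  by (auto simp: in_keys_iff lookup_sc)

lemma lookup_sum_single: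
  "finite A \<Longrightarrow> lookup (\<Sum>m\<in>A. single m (g m)) x = (if x \<in> A then g x else 0)"
  by (induction A rule: finite_induct) (auto simp: lookup_add lookup_single when_def)

lemma expand: "p = (\<Sum>m\<in>keys p. single m (lookup p m))"
  by (rule poly_mapping_eqI) (simp add: lookup_sum_single in_keys_iff)

lemma mdeg_univ: "mdeg (m :: 'v::finite \<Rightarrow>\<^sub>0 nat) = (\<Sum>v\<in>UNIV. lookup m v)"
  unfolding mdeg_def by (rule sum.mono_neutral_left) (auto simp: in_keys_iff)

lemma mdeg_add: "mdeg (a + b :: 'v::finite \<Rightarrow>\<^sub>0 nat) = mdeg a + mdeg b"
  by (simp add: mdeg_univ lookup_add sum.distrib)

lemma lookup_le_mdeg: "lookup (m :: 'v::finite \<Rightarrow>\<^sub>0 nat) v \<le> mdeg m"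
  unfolding mdeg_univ by (rule member_le_sum) auto

lemma mdeg_zero_iff: "mdeg (m :: 'v::finite \<Rightarrow>\<^sub>0 nat) = 0 \<longleftrightarrow> m = 0"
proof
  assume "mdeg m = 0"
  then have "\<forall>v. lookup m v = 0" using lookup_le_mdeg[of m] by (metis le_zero_eq)
  then show "m = 0" by (intro poly_mapping_eqI) auto
qed (simp add: mdeg_def)

lemma mdeg_single: "mdeg (single (v::'v::finite) 1) = 1"
  by (simp add: mdeg_def)

definition hom :: "nat \<Rightarrow> ('v, 'k::comm_ring_1) mpoly set" where
  "hom k = {p. \<forall>m\<in>keys p. mdeg m = k}"

definition mons :: "nat \<Rightarrow> ('v, 'k::comm_ring_1) mpoly set" where
  "mons k = (\<lambda>m. single m 1) ` {m. mdeg m = k}"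

lemma homogeneous_hom: "homogeneous p \<longleftrightarrow> (\<exists>k. p \<in> hom k)"
  unfolding homogeneous_def hom_def by auto

lemma hom_subspace: "V.subspace (hom k :: ('v, 'k::field) mpoly set)"
  unfolding V.subspace_def hom_def
  using keys_add keys_sc by fastforce

lemma zero_hom[simp]: "0 \<in> hom k"
  by (simp add: hom_def)

lemma single_hom: "single m c \<in> hom (mdeg m)"
  by (simp add: hom_def)

lemma hom_mult:
  assumes "p \<in> hom a" "q \<in> hom (b::nat)"
  shows "p * (q :: ('v::finite, 'k::comm_ring_1) mpoly) \<in> hom (a + b)"
  using assms keys_mult[of p q] unfolding hom_def by (fastforce simp: mdeg_add)

lemma finite_deg: "finite {m :: 'v::finite \<Rightarrow>\<^sub>0 nat. mdeg m = k}"
proof -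
  have "lookup ` {m :: 'v \<Rightarrow>\<^sub>0 nat. mdeg m = k} \<subseteq> PiE UNIV (\<lambda>_. {..k})"
  proof
    fix f assume "f \<in> lookup ` {m :: 'v \<Rightarrow>\<^sub>0 nat. mdeg m = k}"
    then obtain m :: "'v \<Rightarrow>\<^sub>0 nat" where "mdeg m = k" "f = lookup m" by blast
    then show "f \<in> PiE UNIV (\<lambda>_. {..k})"
      using lookup_le_mdeg[of m] by (simp add: PiE_iff)
  qed
  moreover have "finite (PiE (UNIV::'v set) (\<lambda>_. {..k::nat}))"
    by (intro finite_PiE) auto
  ultimately have "finite (lookup ` {m :: 'v \<Rightarrow>\<^sub>0 nat. mdeg m = k})"
    by (rule finite_subset)
  moreover have "inj_on lookup {m :: 'v \<Rightarrow>\<^sub>0 nat. mdeg m = k}"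
    by (rule inj_onI) (rule poly_mapping_eqI, simp)
  ultimately show ?thesis using finite_imageD by blast
qed

lemma finite_mons: "finite (mons k :: ('v::finite, 'k::comm_ring_1) mpoly set)"
  unfolding mons_def using finite_deg by blast

lemma single_sc: "single m c = sc c (single m (1::'k::field))"
  by (rule poly_mapping_eqI) (simp add: lookup_sc lookup_single when_def)

lemma hom_span: "hom k \<subseteq> V.span (mons k :: ('v::finite, 'k::field) mpoly set)"
proof
  fix p :: "('v, 'k) mpoly" assume p: "p \<in> hom k"
  have "p = (\<Sum>m\<in>keys p. sc (lookup p m) (single m 1))"
    by (subst expand) (simp add: single_sc[symmetric])
  also have "\<dots> \<in> V.span (mons k)"
    using p by (intro V.span_sum V.span_scale V.span_base) (auto simp: mons_def hom_def)
  finally show "p \<in> V.span (mons k)" .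
qed

definition hpart :: "nat \<Rightarrow> ('v::finite, 'k::comm_ring_1) mpoly \<Rightarrow> ('v, 'k) mpoly" where
  "hpart k p = (\<Sum>m\<in>{m\<in>keys p. mdeg m = k}. single m (lookup p m))"

lemma lookup_hpart: "lookup (hpart k p) m = (if mdeg m = k then lookup p m else 0)"
  unfolding hpart_def by (subst lookup_sum_single) (auto simp: in_keys_iff)

lemma hpart_hom: "hpart k p \<in> hom k"
  unfolding hom_def by (auto simp: in_keys_iff lookup_hpart split: if_splits)

lemma hpart_add: "hpart k (p + q) = hpart k p + hpart k q"
  by (rule poly_mapping_eqI) (simp add: lookup_hpart lookup_add)

lemma hpart_zero[simp]: "hpart k 0 = 0"
  by (rule poly_mapping_eqI) (simp add: lookup_hpart)

lemma hpart_sum: "hpart k (sum g A) = (\<Sum>a\<in>A. hpart k (g a))"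
  by (induction A rule: infinite_finite_induct) (auto simp: hpart_add)

lemma hpart_of_hom: "q \<in> hom l \<Longrightarrow> hpart k q = (if l = k then q else 0)"
  by (rule poly_mapping_eqI) (auto simp: lookup_hpart hom_def in_keys_iff)

lemma hpart_decomp: "p = (\<Sum>k\<in>mdeg ` keys p. hpart k p)"
proof (rule poly_mapping_eqI)
  fix m
  show "lookup p m = lookup (\<Sum>k\<in>mdeg ` keys p. hpart k p) m"
    by (auto simp: lookup_sum lookup_hpart in_keys_iff sum.delta)
qed

lemma hpart_nonzero: "hpart k p \<noteq> 0 \<Longrightarrow> k \<in> mdeg ` keys p"
proof -
  assume "hpart k p \<noteq> 0"
  then obtain m where "lookup (hpart k p) m \<noteq> 0" by (metis poly_mapping_eqI lookup_zero)
  then show ?thesis by (auto simp: lookup_hpart in_keys_iff split: if_splits)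
qed

lemma hpart_mult_hom:
  assumes s: "s \<in> hom e"
  shows "hpart k (r * s) = (if e \<le> k then hpart (k - e) r * s else 0)"
proof -
  let ?D = "mdeg ` keys r"
  have "r * s = (\<Sum>j\<in>?D. hpart j r * s)"
    by (subst hpart_decomp) (simp add: sum_distrib_right)
  then have "hpart k (r * s) = (\<Sum>j\<in>?D. hpart k (hpart j r * s))"
    by (simp add: hpart_sum)
  also have "\<dots> = (\<Sum>j\<in>?D. if j + e = k then hpart j r * s else 0)"
    by (intro sum.cong refl hpart_of_hom hom_mult hpart_hom s)
  also have "\<dots> = (if e \<le> k then hpart (k - e) r * s else 0)"
  proof (cases "e \<le> k")
    case True
    have "(\<Sum>j\<in>?D. if j + e = k then hpart j r * s else 0) = (\<Sum>j\<in>?D. if j = k - e then hpart j r * s else 0)"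
      using True by (intro sum.cong) auto
    also have "\<dots> = (if k - e \<in> ?D then hpart (k - e) r * s else 0)"
      by (simp add: sum.delta)
    also have "\<dots> = hpart (k - e) r * s" using hpart_nonzero[of "k - e" r]
      by (cases "hpart (k - e) r = 0") auto
    finally show ?thesis using True by simp
  next
    case False
    then show ?thesis by (auto intro!: sum.neutral)
  qed
  finally show ?thesis .
qed

lemma hpart_sc: "hpart k (sc c p) = sc c (hpart k p)"
  by (rule poly_mapping_eqI) (simp add: lookup_hpart lookup_sc)

lemma ideal_gen_ideal: "is_ideal (ideal_gen S)"
  unfolding ideal_gen_def is_ideal_def by auto

lemma ideal_gen_sup: "S \<subseteq> ideal_gen S"
  unfolding ideal_gen_def by auto

lemma ideal_gen_min: "is_ideal J \<Longrightarrow> S \<subseteq> J \<Longrightarrow> ideal_gen S \<subseteq> J"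
  unfolding ideal_gen_def by auto

lemma ideal_zero: "is_ideal J \<Longrightarrow> 0 \<in> J"
  unfolding is_ideal_def by auto
lemma ideal_add: "is_ideal J \<Longrightarrow> a \<in> J \<Longrightarrow> b \<in> J \<Longrightarrow> a + b \<in> J"
  unfolding is_ideal_def by auto
lemma ideal_mult: "is_ideal J \<Longrightarrow> a \<in> J \<Longrightarrow> r * a \<in> J"
  unfolding is_ideal_def by auto
lemma ideal_mult2: "is_ideal J \<Longrightarrow> a \<in> J \<Longrightarrow> a * r \<in> J"
  using ideal_mult[of J a r] by (simp add: mult.commute)
lemma ideal_neg: "is_ideal J \<Longrightarrow> a \<in> J \<Longrightarrow> - a \<in> J"
  using ideal_mult[of J a "-1"] by simp
lemma ideal_diff: "is_ideal J \<Longrightarrow> a \<in> J \<Longrightarrow> b \<in> J \<Longrightarrow> a - b \<in> J"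
  using ideal_add[of J a "- b"] ideal_neg by auto
lemma ideal_sum: "is_ideal J \<Longrightarrow> (\<And>a. a \<in> A \<Longrightarrow> g a \<in> J) \<Longrightarrow> sum g A \<in> J"
  by (induction A rule: infinite_finite_induct) (auto simp: ideal_zero ideal_add)

lemma ideal_subspace: "is_ideal (J :: ('v, 'k::field) mpoly set) \<Longrightarrow> V.subspace J"
  unfolding V.subspace_def sc_def by (auto simp: ideal_zero ideal_add ideal_mult)

lemma ideal_gen_empty: "ideal_gen {} = {0}"
proof -
  have "is_ideal ({0} :: ('a, 'b::comm_ring_1) mpoly set)" unfolding is_ideal_def by auto
  then show ?thesis using ideal_gen_min[of "{0}" "{}"] ideal_zero[OF ideal_gen_ideal] by auto
qed

definition ext :: "('v, 'k::comm_ring_1) mpoly set \<Rightarrow> ('v, 'k) mpoly \<Rightarrow> ('v, 'k) mpoly set" where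
  "ext J f = {j + r * f | j r. j \<in> J}"

lemma ext_ideal: assumes J: "is_ideal J" shows "is_ideal (ext J f)"
  unfolding is_ideal_def
proof (intro conjI ballI allI)
  have "(0::('a, 'b) mpoly) = 0 + 0 * f" by simp
  then show "0 \<in> ext J f" unfolding ext_def using ideal_zero[OF J] by blast
next
  fix a b assume "a \<in> ext J f" "b \<in> ext J f"
  then obtain j r j' r' where "a = j + r * f" "j \<in> J" "b = j' + r' * f" "j' \<in> J"
    unfolding ext_def by blast
  then have "a + b = (j + j') + (r + r') * f" "j + j' \<in> J"
    by (simp_all add: algebra_simps ideal_add[OF J])
  then show "a + b \<in> ext J f" unfolding ext_def by blast
next
  fix s a assume "a \<in> ext J f"
  then obtain j r where "a = j + r * f" "j \<in> J"
    unfolding ext_def by blast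
  then have "s * a = (s * j) + (s * r) * f" "s * j \<in> J"
    by (simp add: algebra_simps, intro ideal_mult[OF J])
  then show "s * a \<in> ext J f" unfolding ext_def by blast
qed

lemma ext_sub1: "is_ideal J \<Longrightarrow> J \<subseteq> ext J f"
proof
  fix x assume "x \<in> J"
  moreover have "x = x + 0 * f" by simp
  ultimately show "x \<in> ext J f" unfolding ext_def by blast
qed

lemma ext_sub2: "is_ideal J \<Longrightarrow> f \<in> ext J f"
proof -
  assume "is_ideal J"
  then have "0 \<in> J" by (rule ideal_zero)
  moreover have "f = 0 + 1 * f" by simp
  ultimately show "f \<in> ext J f" unfolding ext_def by blast
qed

lemma ext_min: "is_ideal J \<Longrightarrow> is_ideal K \<Longrightarrow> J \<subseteq> K \<Longrightarrow> f \<in> K \<Longrightarrow> ext J f \<subseteq> K"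
  unfolding ext_def by (auto intro: ideal_add ideal_mult)

lemma ideal_gen_insert: "ideal_gen (insert a S) = ext (ideal_gen S) a"
proof
  show "ideal_gen (insert a S) \<subseteq> ext (ideal_gen S) a"
  proof (rule ideal_gen_min[OF ext_ideal[OF ideal_gen_ideal]])
    show "insert a S \<subseteq> ext (ideal_gen S) a"
      using ext_sub1[OF ideal_gen_ideal[of S], of a] ext_sub2[OF ideal_gen_ideal[of S], of a] ideal_gen_sup[of S] by blast
  qed
  show "ext (ideal_gen S) a \<subseteq> ideal_gen (insert a S)"
    by (intro ext_min ideal_gen_ideal ideal_gen_min) (auto intro: ideal_gen_sup[THEN subsetD])
qed

definition homog_ideal :: "('v::finite, 'k::comm_ring_1) mpoly set \<Rightarrow> bool" where
  "homog_ideal J \<longleftrightarrow> is_ideal J \<and> (\<forall>p\<in>J. \<forall>k. hpart k p \<in> J)"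

lemma homog_zero: "homog_ideal {0}"
  unfolding homog_ideal_def is_ideal_def by auto

lemma homog_ext:
  assumes J: "homog_ideal J" and f: "f \<in> hom e"
  shows "homog_ideal (ext J f)"
  unfolding homog_ideal_def
proof (intro conjI ballI allI)
  show "is_ideal (ext J f)" using J ext_ideal homog_ideal_def by blast
  fix p k assume "p \<in> ext J f"
  then obtain j r where p: "p = j + r * f" "j \<in> J" unfolding ext_def by auto
  have "hpart k p = hpart k j + (if e \<le> k then hpart (k - e) r * f else 0)"
    by (simp add: p hpart_add hpart_mult_hom[OF f])
  moreover have "hpart k j \<in> J" using J p unfolding homog_ideal_def by auto
  show "hpart k p \<in> ext J f"
  proof (cases "e \<le> k")
    case True
    then show ?thesis using \<open>hpart k j \<in> J\<close> \<open>hpart k p = _\<close> unfolding ext_def by auto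
  next
    case False
    then have "hpart k p = hpart k j + 0 * f" using \<open>hpart k p = _\<close> by simp
    then show ?thesis using \<open>hpart k j \<in> J\<close> unfolding ext_def by blast
  qed
qed

definition cd :: "('v::finite, 'k::field) mpoly set \<Rightarrow> nat \<Rightarrow> int" where
  "cd J k = int (V.dim (hom k :: ('v, 'k) mpoly set)) - int (V.dim (J \<inter> hom k))"

definition H :: "('v::finite, 'k::field) mpoly set \<Rightarrow> int fps" where
  "H J = Abs_fps (cd J)"

lemma ext_hom_eq:
  assumes J: "homog_ideal J" and f: "f \<in> hom e" and ek: "e \<le> k"
  shows "ext J f \<inter> hom k = V.span ((J \<inter> hom k) \<union> (\<lambda>g. f * g) ` hom (k - e))"
proof
  have Ji: "is_ideal J" using J homog_ideal_def by blast
  show "ext J f \<inter> hom k \<subseteq> V.span ((J \<inter> hom k) \<union> (\<lambda>g. f * g) ` hom (k - e))"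
  proof
    fix p assume p: "p \<in> ext J f \<inter> hom k"
    then obtain j r where jr: "p = j + r * f" "j \<in> J" unfolding ext_def by blast
    have "p = hpart k p" using p hpart_of_hom[of p k k] by simp
    also have "\<dots> = hpart k j + f * hpart (k - e) r"
      unfolding jr(1) hpart_add hpart_mult_hom[OF f] using ek by (simp add: mult.commute)
    finally have pe: "p = hpart k j + f * hpart (k - e) r" .
    have "hpart k j \<in> J \<inter> hom k" using J jr hpart_hom unfolding homog_ideal_def by blast
    moreover have "f * hpart (k - e) r \<in> (\<lambda>g. f * g) ` hom (k - e)" using hpart_hom by blast
    ultimately show "p \<in> V.span ((J \<inter> hom k) \<union> (\<lambda>g. f * g) ` hom (k - e))"
      unfolding pe by (intro V.span_add V.span_base) auto
  qed
  show "V.span ((J \<inter> hom k) \<union> (\<lambda>g. f * g) ` hom (k - e)) \<subseteq> ext J f \<inter> hom k"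
  proof (rule V.span_minimal)
    show "V.subspace (ext J f \<inter> hom k)"
      by (intro V.subspace_inter ideal_subspace ext_ideal Ji hom_subspace)
    have "f * g \<in> ext J f \<inter> hom k" if "g \<in> hom (k - e)" for g
    proof
      have "f * g = 0 + g * f" by (simp add: mult.commute)
      then show "f * g \<in> ext J f" unfolding ext_def using ideal_zero[OF Ji] by blast
      show "f * g \<in> hom k" using hom_mult[OF f that] ek by simp
    qed
    then show "J \<inter> hom k \<union> (\<lambda>g. f * g) ` hom (k - e) \<subseteq> ext J f \<inter> hom k"
      using ext_sub1[OF Ji, of f] by blast
  qed
qed

lemma ext_hom_eq2:
  assumes J: "homog_ideal J" and f: "f \<in> hom e" and ek: "k < e"
  shows "ext J f \<inter> hom k = J \<inter> hom k"
proof
  have Ji: "is_ideal J" using J homog_ideal_def by blast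
  show "ext J f \<inter> hom k \<subseteq> J \<inter> hom k"
  proof
    fix p assume p: "p \<in> ext J f \<inter> hom k"
    then obtain j r where jr: "p = j + r * f" "j \<in> J" unfolding ext_def by blast
    have "p = hpart k p" using p hpart_of_hom[of p k k] by simp
    also have "\<dots> = hpart k j"
      unfolding jr(1) hpart_add hpart_mult_hom[OF f] using ek by simp
    finally show "p \<in> J \<inter> hom k" using p J jr unfolding homog_ideal_def by auto
  qed
  show "J \<inter> hom k \<subseteq> ext J f \<inter> hom k" using ext_sub1[OF Ji, of f] by blast
qed

lemma linear_mult: "Vector_Spaces.linear sc sc (\<lambda>g. f * (g :: ('v, 'k::field) mpoly))"
  unfolding Vector_Spaces.linear_iff
proof (intro conjI allI)
  show "vector_space (sc :: 'k \<Rightarrow> ('v, 'k) mpoly \<Rightarrow> _)" by (rule V.vector_space_axioms)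
  then show "vector_space (sc :: 'k \<Rightarrow> ('v, 'k) mpoly \<Rightarrow> _)" .
  fix x y :: "('v, 'k) mpoly" and c :: 'k
  show "f * (x + y) = f * x + f * y" by (simp add: distrib_left)
  show "f * sc c x = sc c (f * x)" by (simp add: sc_def mult.left_commute)
qed

lemma hom_inter_span: "J \<inter> hom k \<subseteq> V.span (mons k :: ('v::finite, 'k::field) mpoly set)"
  using hom_span by blast

lemma cd_ext:
  fixes J :: "('v::finite, 'k::field) mpoly set"
  assumes J: "homog_ideal J" and f: "f \<in> hom e" and nzd: "\<And>g. f * g \<in> J \<Longrightarrow> g \<in> J"
  shows "cd (ext J f) k = cd J k - (if e \<le> k then cd J (k - e) else 0)"
proof (cases "e \<le> k")
  case True
  have Ji: "is_ideal J" using J homog_ideal_def by blast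
  have "V.dim (V.span ((J \<inter> hom k) \<union> (\<lambda>g. f * g) ` hom (k - e))) + V.dim (J \<inter> hom (k - e))
      = V.dim (J \<inter> hom k) + V.dim (hom (k - e) :: ('v, 'k) mpoly set)"
  proof (rule V.dim_formula[of "J \<inter> hom k" "hom (k-e)" "J \<inter> hom (k-e)" "mons (k-e)" "mons k" "(*) f"])
    show "finite (mons (k-e) :: ('v, 'k) mpoly set)" "finite (mons k :: ('v, 'k) mpoly set)" by (rule finite_mons)+
    show "hom (k - e) \<subseteq> V.span (mons (k - e) :: ('v, 'k) mpoly set)" by (rule hom_span)
    show "J \<inter> hom k \<subseteq> V.span (mons k)" by (rule hom_inter_span)
    show "Vector_Spaces.linear sc sc ((*) f)" by (rule linear_mult)
    show "V.subspace (J \<inter> hom k)" "V.subspace (J \<inter> hom (k - e))"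
      by (intro V.subspace_inter ideal_subspace Ji hom_subspace)+
    show "V.subspace (hom (k - e))" by (rule hom_subspace)
    show "J \<inter> hom (k - e) \<subseteq> hom (k - e)" by blast
    show "(*) f ` (J \<inter> hom (k - e)) \<subseteq> J \<inter> hom k"
      using hom_mult[OF f] True ideal_mult[OF Ji] by fastforce
    show "g \<in> J \<inter> hom (k - e)" if "g \<in> hom (k - e)" "f * g \<in> J \<inter> hom k" for g
      using that nzd by blast
  qed
  then show ?thesis using True ext_hom_eq[OF J f True] unfolding cd_def by simp
next
  case False
  then show ?thesis using ext_hom_eq2[OF J f] unfolding cd_def by simp
qed

lemma H_ext:
  fixes J :: "('v::finite, 'k::field) mpoly set"
  assumes J: "homog_ideal J" and f: "f \<in> hom e" and nzd: "\<And>g. f * g \<in> J \<Longrightarrow> g \<in> J"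
  shows "H (ext J f) = (1 - fps_X ^ e) * H J"
  by (rule fps_ext) (simp add: H_def left_diff_distrib fps_X_power_mult_nth cd_ext[OF assms] not_less)

definition Xv :: "'v \<Rightarrow> ('v, 'k::comm_ring_1) mpoly" where
  "Xv v = single (single v 1) 1"

definition MI :: "'v set \<Rightarrow> ('v, 'k::comm_ring_1) mpoly set" where
  "MI V = {p. \<forall>m\<in>keys p. \<exists>v\<in>V. 0 < lookup m v}"

lemma MI_ideal: "is_ideal (MI V :: ('v, 'k::comm_ring_1) mpoly set)"
  unfolding is_ideal_def
proof (intro conjI ballI allI)
  show "0 \<in> MI V" by (simp add: MI_def)
  fix a b :: "('v, 'k) mpoly" assume "a \<in> MI V" "b \<in> MI V"
  then show "a + b \<in> MI V" using keys_add[of a b] unfolding MI_def by blast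
next
  fix r a :: "('v, 'k) mpoly" assume a: "a \<in> MI V"
  show "r * a \<in> MI V" unfolding MI_def
  proof (rule CollectI, rule ballI)
    fix m assume "m \<in> keys (r * a)"
    then obtain x y where "m = x + y" "y \<in> keys a" using keys_mult[of r a] by blast
    then obtain v where "v \<in> V" "0 < lookup y v" using a unfolding MI_def by blast
    then show "\<exists>v\<in>V. 0 < lookup m v" using \<open>m = x + y\<close> by (auto simp: lookup_add)
  qed
qed

lemma keys_hpart: "keys (hpart k p) \<subseteq> keys p"
  by (auto simp: in_keys_iff lookup_hpart split: if_splits)

lemma MI_homog: "homog_ideal (MI V :: ('v::finite, 'k::comm_ring_1) mpoly set)"
  unfolding homog_ideal_def using MI_ideal keys_hpart unfolding MI_def by blast

lemma MI_empty: "MI {} = {0}"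
  unfolding MI_def by auto

lemma Xv_hom: "(Xv v :: ('v::finite, 'k::comm_ring_1) mpoly) \<in> hom 1"
  unfolding Xv_def using single_hom[of "single v 1"] mdeg_single[of v] by simp

lemma Xv_MI: "w \<in> V \<Longrightarrow> (Xv w :: ('v, 'k::comm_ring_1) mpoly) \<in> MI V"
  unfolding MI_def Xv_def by (auto intro!: bexI[of _ w])

lemma MI_mono: "V \<subseteq> W \<Longrightarrow> MI V \<subseteq> MI W"
  unfolding MI_def by blast

lemma single_in_MI: "(\<exists>v\<in>V. 0 < lookup m v) \<Longrightarrow> single m c \<in> MI V"
  unfolding MI_def by auto

lemma ext_MI: "ext (MI V) (Xv w :: ('v, 'k::comm_ring_1) mpoly) = MI (insert w V)"
proof
  show "ext (MI V) (Xv w) \<subseteq> MI (insert w V)"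
    by (rule ext_min[OF MI_ideal MI_ideal MI_mono Xv_MI]) auto
  show "MI (insert w V) \<subseteq> ext (MI V) (Xv w)"
  proof (rule subsetI)
    fix p assume p: "p \<in> MI (insert w V)"
    have "(\<Sum>m\<in>keys p. single m (lookup p m)) \<in> ext (MI V) (Xv w)"
    proof (rule ideal_sum[OF ext_ideal[OF MI_ideal]])
      fix m assume m: "m \<in> keys p"
      show "single m (lookup p m) \<in> ext (MI V) (Xv w)"
      proof (cases "\<exists>v\<in>V. 0 < lookup m v")
        case True
        then have "single m (lookup p m) \<in> MI V" by (rule single_in_MI)
        then show ?thesis by (rule subsetD[OF ext_sub1[OF MI_ideal]])
      next
        case False
        then have w: "0 < lookup m w" using p m unfolding MI_def by auto
        have "m - single w 1 + single w 1 = m"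
          by (rule poly_mapping_eqI) (use w in \<open>auto simp: lookup_add lookup_minus lookup_single when_def\<close>)
        then have "single m (lookup p m) = 0 + single (m - single w 1) (lookup p m) * Xv w"
          unfolding Xv_def by (simp add: mult_single)
        then show ?thesis unfolding ext_def using ideal_zero[OF MI_ideal] by blast
      qed
    qed
    moreover have "p = (\<Sum>m\<in>keys p. single m (lookup p m))" by (rule expand)
    ultimately show "p \<in> ext (MI V) (Xv w)" by metis
  qed
qed

lemma lookup_Xv_mult: "lookup (Xv w * g) (single w 1 + m) = lookup g m"
proof -
  have "Xv w * g = Xv w * (\<Sum>m'\<in>keys g. single m' (lookup g m'))"
    using expand[of g] by (rule arg_cong)
  also have "\<dots> = (\<Sum>m'\<in>keys g. single (single w 1 + m') (lookup g m'))"
    by (simp add: Xv_def sum_distrib_left mult_single)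
  finally have X: "Xv w * g = (\<Sum>m'\<in>keys g. single (single w 1 + m') (lookup g m'))" .
  have "lookup (Xv w * g) (single w 1 + m) = (\<Sum>m'\<in>keys g. (lookup g m' when m' = m))"
    unfolding X by (simp add: lookup_sum lookup_single)
  also have "\<dots> = lookup g m"
    by (cases "m \<in> keys g") (auto simp: when_def in_keys_iff)
  finally show ?thesis .
qed

lemma MI_nzd:
  assumes "w \<notin> V" "Xv w * g \<in> MI V"
  shows "g \<in> MI V"
  unfolding MI_def
proof (rule CollectI, rule ballI)
  fix m assume "m \<in> keys g"
  then have "single w 1 + m \<in> keys (Xv w * g)" using lookup_Xv_mult[of w g m] by (simp add: in_keys_iff)
  then obtain v where "v \<in> V" "0 < lookup (single w 1 + m) v" using assms(2) unfolding MI_def by blast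
  moreover have "v \<noteq> w" using assms(1) \<open>v \<in> V\<close> by auto
  ultimately show "\<exists>v\<in>V. 0 < lookup m v" by (auto simp: lookup_add lookup_single)
qed

lemma dim_zero_space: "V.dim {0 :: ('v, 'k::field) mpoly} = 0"
  using V.dim_span_eq_card_independent[of "{}"] V.independent_empty by simp

lemma dim_hom0: "V.dim (hom 0 :: ('v::finite, 'k::field) mpoly set) = 1"
proof (rule V.dim_unique[of "{1}"])
  show "{1} \<subseteq> (hom 0 :: ('v, 'k) mpoly set)" by (simp add: hom_def mdeg_def)
  show "V.independent {1 :: ('v, 'k) mpoly}" by simp
  show "card {1 :: ('v, 'k) mpoly} = 1" by simp
  show "hom 0 \<subseteq> V.span {1 :: ('v, 'k) mpoly}"
  proof
    fix p :: "('v, 'k) mpoly" assume p: "p \<in> hom 0"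
    have "p = sc (lookup p 0) 1"
    proof (rule poly_mapping_eqI)
      fix m
      show "lookup p m = lookup (sc (lookup p 0) 1) m"
      proof (cases "m = 0")
        case False
        then have "m \<notin> keys p" using p mdeg_zero_iff unfolding hom_def by blast
        then show ?thesis using False by (simp add: lookup_sc lookup_one in_keys_iff)
      qed (simp add: lookup_sc)
    qed
    then show "p \<in> V.span {1}" by (metis V.span_base V.span_scale singletonI)
  qed
qed

lemma H_MI_UNIV: "H (MI UNIV :: ('v::finite, 'k::field) mpoly set) = 1"
proof (rule fps_ext)
  fix n
  show "fps_nth (H (MI UNIV :: ('v, 'k) mpoly set)) n = fps_nth 1 n"
  proof (cases "n = 0")
    case True
    have "MI UNIV \<inter> hom 0 = {0 :: ('v, 'k) mpoly}"
    proof
      show "MI UNIV \<inter> hom 0 \<subseteq> {0 :: ('v, 'k) mpoly}"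
      proof
        fix p :: "('v, 'k) mpoly" assume p: "p \<in> MI UNIV \<inter> hom 0"
        have "keys p = {}"
        proof (rule ccontr)
          assume "keys p \<noteq> {}"
          then obtain m where m: "m \<in> keys p" by blast
          then have "mdeg m = 0" using p unfolding hom_def by blast
          then have "m = 0" by (simp add: mdeg_zero_iff)
          then show False using m p unfolding MI_def by auto
        qed
        then show "p \<in> {0}" by simp
      qed
      show "{0 :: ('v, 'k) mpoly} \<subseteq> MI UNIV \<inter> hom 0" by (simp add: MI_def)
    qed
    then show ?thesis using True dim_hom0[where 'v='v and 'k='k] dim_zero_space[where 'v='v and 'k='k]
      by (simp add: H_def cd_def)
  next
    case False
    have "hom n \<subseteq> (MI UNIV :: ('v, 'k) mpoly set)"
    proof
      fix p :: "('v, 'k) mpoly" assume "p \<in> hom n"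
      then have "\<forall>m\<in>keys p. mdeg m = n" unfolding hom_def by blast
      then have "\<forall>m\<in>keys p. m \<noteq> 0" using False mdeg_zero_iff by metis
      show "p \<in> MI UNIV" unfolding MI_def
      proof (rule CollectI, rule ballI)
        fix m assume "m \<in> keys p"
        then have "m \<noteq> 0" using \<open>\<forall>m\<in>keys p. m \<noteq> 0\<close> by blast
        then obtain v where "lookup m v \<noteq> 0"
          using poly_mapping_eqI[of m 0] by auto
        then show "\<exists>v\<in>UNIV. 0 < lookup m v" by auto
      qed
    qed
    then have "MI UNIV \<inter> hom n = (hom n :: ('v, 'k) mpoly set)" by blast
    then show ?thesis using False by (simp add: H_def cd_def)
  qed
qed

lemma H_MI_list:
  "distinct ws \<Longrightarrow> H (MI (set ws) :: ('v::finite, 'k::field) mpoly set) = (1 - fps_X) ^ length ws * H ({0} :: ('v, 'k) mpoly set)"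
proof (induction ws)
  case Nil
  then show ?case by (simp add: MI_empty)
next
  case (Cons w ws)
  have "H (MI (set (w # ws)) :: ('v, 'k) mpoly set) = H (ext (MI (set ws)) (Xv w) :: ('v, 'k) mpoly set)"
    by (simp add: ext_MI)
  also have "\<dots> = (1 - fps_X ^ 1) * H (MI (set ws) :: ('v, 'k) mpoly set)"
    by (rule H_ext[OF MI_homog Xv_hom]) (use Cons.prems MI_nzd in auto)
  also have "\<dots> = (1 - fps_X) ^ length (w # ws) * H ({0} :: ('v, 'k) mpoly set)"
    using Cons by simp
  finally show ?case .
qed

lemma H_zero_inv: "(1 - fps_X) ^ CARD('v::finite) * H ({0} :: ('v, 'k::field) mpoly set) = 1"
proof -
  obtain ws :: "'v list" where ws: "set ws = UNIV" "distinct ws"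
    using finite_distinct_list[of "UNIV :: 'v set"] by auto
  have "length ws = CARD('v)" using distinct_card[OF ws(2)] ws(1) by simp
  then show ?thesis using H_MI_list[OF ws(2), where 'k='k] ws(1) H_MI_UNIV[where 'k='k and 'v='v] by simp
qed

definition Psum :: "nat \<Rightarrow> int fps" where
  "Psum e = (\<Sum>t<e. fps_X ^ t)"

lemma one_minus_X_power: "1 - fps_X ^ e = (1 - fps_X) * Psum e"
  by (induction e) (simp_all add: Psum_def algebra_simps)

definition bnd :: "int fps \<Rightarrow> nat \<Rightarrow> bool" where
  "bnd g N \<longleftrightarrow> (\<forall>k>N. fps_nth g k = 0)"

lemma bnd_Psum: "bnd (Psum e) e"
  unfolding bnd_def Psum_def by (simp add: fps_sum_nth)

lemma bnd_mult:
  assumes "bnd a N" "bnd b M"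
  shows "bnd (a * b) (N + M)"
  unfolding bnd_def
proof (intro allI impI)
  fix k assume k: "N + M < k"
  have "fps_nth a i * fps_nth b (k - i) = 0" if "i \<in> {0..k}" for i
  proof (cases "N < i")
    case True then show ?thesis using assms(1) unfolding bnd_def by simp
  next
    case False then have "M < k - i" using k by simp
    then show ?thesis using assms(2) unfolding bnd_def by simp
  qed
  then show "fps_nth (a * b) k = 0" unfolding fps_mult_nth by (intro sum.neutral) blast
qed

lemma bnd_prod:
  "finite A \<Longrightarrow> (\<And>j. j \<in> A \<Longrightarrow> bnd (g j) (e j)) \<Longrightarrow> bnd (\<Prod>j\<in>A. g j) (\<Sum>j\<in>A. e j)"
proof (induction A rule: finite_induct)
  case empty
  then show ?case by (simp add: bnd_def)
next
  case (insert x F)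
  then show ?case using bnd_mult[of "g x" "e x" "\<Prod>j\<in>F. g j" "\<Sum>j\<in>F. e j"] by simp
qed

definition deg :: "('v::finite, 'k::field) mpoly \<Rightarrow> nat" where
  "deg p = (SOME e. p \<in> hom e)"

lemma deg_hom: "homogeneous p \<Longrightarrow> p \<in> hom (deg p)"
  unfolding deg_def homogeneous_hom by (rule someI_ex)

lemma chain:
  fixes f :: "nat \<Rightarrow> ('v::finite, 'k::field) mpoly"
  assumes ci: "complete_intersection f"
  shows "i \<le> CARD('v) \<Longrightarrow> homog_ideal (ideal_gen (f ` {1..i})) \<and>
     H (ideal_gen (f ` {1..i})) = (\<Prod>j\<in>{1..i}. (1 - fps_X ^ deg (f j))) * H ({0} :: ('v, 'k) mpoly set)"
proof (induction i)
  case 0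
  then show ?case by (simp add: ideal_gen_empty homog_zero)
next
  case (Suc i)
  let ?J = "ideal_gen (f ` {1..i})"
  have IH: "homog_ideal ?J" "H ?J = (\<Prod>j\<in>{1..i}. (1 - fps_X ^ deg (f j))) * H ({0} :: ('v, 'k) mpoly set)"
    using Suc by auto
  have si: "Suc i \<in> {1..CARD('v)}" using Suc.prems by simp
  have hom: "f (Suc i) \<in> hom (deg (f (Suc i)))"
    using ci si unfolding complete_intersection_def by (intro deg_hom) blast
  have nzd: "\<And>g. f (Suc i) * g \<in> ?J \<Longrightarrow> g \<in> ?J"
  proof -
    fix g assume "f (Suc i) * g \<in> ?J"
    moreover have "{1..<Suc i} = {1..i}" by auto
    ultimately show "g \<in> ?J"
      using ci si unfolding complete_intersection_def regular_sequence_def by metis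
  qed
  have eq: "ideal_gen (f ` {1..Suc i}) = ext ?J (f (Suc i))"
    by (simp add: atLeastAtMostSuc_conv ideal_gen_insert)
  have "homog_ideal (ideal_gen (f ` {1..Suc i}))"
    unfolding eq by (rule homog_ext[OF IH(1) hom])
  moreover have "H (ideal_gen (f ` {1..Suc i})) =
      (\<Prod>j\<in>{1..Suc i}. (1 - fps_X ^ deg (f j))) * H ({0} :: ('v, 'k) mpoly set)"
  proof -
    have "H (ideal_gen (f ` {1..Suc i})) = H (ext ?J (f (Suc i)))" using eq by simp
    also have "\<dots> = (1 - fps_X ^ deg (f (Suc i))) * H ?J" by (rule H_ext[OF IH(1) hom nzd])
    also have "\<dots> = (\<Prod>j\<in>{1..Suc i}. (1 - fps_X ^ deg (f j))) * H ({0} :: ('v, 'k) mpoly set)"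
      unfolding IH(2) by (simp add: atLeastAtMostSuc_conv mult.assoc)
    finally show ?thesis .
  qed
  ultimately show ?case by blast
qed

lemma final_bound:
  fixes f :: "nat \<Rightarrow> ('v::finite, 'k::field) mpoly"
  assumes ci: "complete_intersection f"
  shows "\<exists>N. \<forall>k>N. hom k \<subseteq> ideal_gen (f ` {1..CARD('v)})"
proof -
  let ?n = "CARD('v)"
  let ?J = "ideal_gen (f ` {1..?n})"
  have c: "homog_ideal ?J" "H ?J = (\<Prod>j\<in>{1..?n}. (1 - fps_X ^ deg (f j))) * H ({0} :: ('v, 'k) mpoly set)"
    using chain[OF ci, of ?n] by auto
  have "(\<Prod>j\<in>{1..?n}. (1 - fps_X ^ deg (f j))) = (\<Prod>j\<in>{1..?n}. Psum (deg (f j))) * (1 - fps_X) ^ ?n"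
    by (simp add: one_minus_X_power prod.distrib mult.commute)
  then have "H ?J = (\<Prod>j\<in>{1..?n}. Psum (deg (f j)))"
    using c(2) H_zero_inv[where 'v='v and 'k='k] by (simp add: mult.assoc)
  moreover have "bnd (\<Prod>j\<in>{1..?n}. Psum (deg (f j))) (\<Sum>j\<in>{1..?n}. deg (f j))"
    by (rule bnd_prod) (auto intro: bnd_Psum)
  ultimately have b: "bnd (H ?J) (\<Sum>j\<in>{1..?n}. deg (f j))" by simp
  have "hom k \<subseteq> ?J" if k: "k > (\<Sum>j\<in>{1..?n}. deg (f j))" for k
  proof -
    have "cd ?J k = 0" using b k unfolding bnd_def H_def by simp
    then have "V.dim (?J \<inter> hom k) = V.dim (hom k :: ('v, 'k) mpoly set)" unfolding cd_def by simp
    moreover have "V.subspace (?J \<inter> hom k)"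
      by (intro V.subspace_inter ideal_subspace ideal_gen_ideal hom_subspace)
    ultimately have "hom k \<subseteq> ?J \<inter> hom k"
      using V.dim_sub(2)[of "?J \<inter> hom k" "hom k" "mons k"] hom_span finite_mons by blast
    then show ?thesis by blast
  qed
  then show ?thesis by blast
qed

lemma single_one_inj: "single m (1::'k::field) = single m' 1 \<Longrightarrow> m = m'"
  by (metis lookup_single_eq lookup_single_not_eq one_neq_zero)

lemma fin_dim_from:
  fixes G :: "('v::finite, 'k::field) mpoly set"
  assumes G: "is_ideal G" and N: "\<And>k. k > N \<Longrightarrow> hom k \<subseteq> G"
  shows "fin_dim_quotient G"
  unfolding fin_dim_quotient_def
proof (intro exI conjI allI)
  let ?Mn = "{m :: 'v \<Rightarrow>\<^sub>0 nat. mdeg m \<le> N}"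
  let ?B = "(\<lambda>m. single m (1::'k)) ` ?Mn"
  have fMn: "finite ?Mn"
  proof -
    have "?Mn = (\<Union>k\<in>{..N}. {m. mdeg m = k})" by auto
    then show ?thesis using finite_deg[where 'v='v] by simp
  qed
  then show "finite ?B" by simp
  fix p :: "('v, 'k) mpoly"
  let ?c = "\<lambda>b :: ('v, 'k) mpoly. lookup p (SOME m. b = single m 1)"
  have inj: "inj_on (\<lambda>m. single m (1::'k)) ?Mn"
    by (rule inj_onI) (rule single_one_inj)
  have "(\<Sum>b\<in>?B. const_poly (?c b) * b) = (\<Sum>m\<in>?Mn. const_poly (?c (single m 1)) * single m 1)"
    using sum.reindex[OF inj, of "\<lambda>b. const_poly (?c b) * b"] by (simp add: comp_def)
  also have "\<dots> = (\<Sum>m\<in>?Mn. single m (lookup p m))"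
  proof (rule sum.cong[OF refl])
    fix m :: "'v \<Rightarrow>\<^sub>0 nat"
    have "(SOME m'. single m (1::'k) = single m' 1) = m"
      by (rule some_equality) (auto dest: single_one_inj)
    then show "const_poly (?c (single m 1)) * single m 1 = single m (lookup p m)"
      by (simp add: const_poly_def mult_single)
  qed
  finally have S: "(\<Sum>b\<in>?B. const_poly (?c b) * b) = (\<Sum>m\<in>?Mn. single m (lookup p m))" .
  let ?q = "p - (\<Sum>m\<in>?Mn. single m (lookup p m))"
  have lq: "lookup ?q m = (if m \<in> ?Mn then 0 else lookup p m)" for m
    using fMn by (simp add: lookup_minus lookup_sum_single)
  have "(\<Sum>m\<in>keys ?q. single m (lookup ?q m)) \<in> G"
  proof (rule ideal_sum[OF G])
    fix m assume "m \<in> keys ?q"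
    then have "mdeg m > N" using lq[of m] by (auto simp: in_keys_iff split: if_splits)
    then show "single m (lookup ?q m) \<in> G" using N single_hom by blast
  qed
  moreover have "?q = (\<Sum>m\<in>keys ?q. single m (lookup ?q m))" by (rule expand)
  ultimately have "?q \<in> G" by metis
  then show "p - (\<Sum>b\<in>?B. const_poly (?c b) * b) \<in> G" unfolding S .
qed

theorem lemma3p6:
  fixes f :: "nat \<Rightarrow> ('v::finite, 'k::field) mpoly" and d :: nat
  assumes "complete_intersection f"
    and "\<And>\<Delta> i. simplicial_complex \<Delta> \<Longrightarrow> complex_dim \<Delta> d \<Longrightarrow> d + 1 < i \<Longrightarrow> i \<le> CARD('v)
             \<Longrightarrow> f i \<in> stanley_reisner \<Delta>"
  shows "\<forall>\<Delta>. simplicial_complex \<Delta> \<and> complex_dim \<Delta> d \<longrightarrow>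
           system_of_parameters (stanley_reisner \<Delta>) f (d + 1)"
proof (intro allI impI)
  fix \<Delta> :: "'v set set" assume D: "simplicial_complex \<Delta> \<and> complex_dim \<Delta> d"
  let ?n = "CARD('v)"
  let ?G = "ideal_gen (stanley_reisner \<Delta> \<union> f ` {1..d + 1})"
  obtain F where F: "F \<in> \<Delta>" "card F = d + 1" using D unfolding complex_dim_def by blast
  have "card F \<le> ?n" by (rule card_mono) auto
  then have dn: "d + 1 \<le> ?n" using F by simp
  have hom: "\<forall>i\<in>{1..d + 1}. homogeneous (f i)"
    using assms(1) dn unfolding complete_intersection_def by auto
  have fG: "f ` {1..?n} \<subseteq> ?G"
  proof
    fix x assume "x \<in> f ` {1..?n}"
    then obtain i where i: "i \<in> {1..?n}" "x = f i" by blast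
    show "x \<in> ?G"
    proof (cases "i \<le> d + 1")
      case True
      then show ?thesis using i ideal_gen_sup by fastforce
    next
      case False
      then have "f i \<in> stanley_reisner \<Delta>" using assms(2) D i by auto
      then show ?thesis using i ideal_gen_sup by fastforce
    qed
  qed
  have JG: "ideal_gen (f ` {1..?n}) \<subseteq> ?G"
    by (rule ideal_gen_min[OF ideal_gen_ideal fG])
  obtain N where N: "\<forall>k>N. hom k \<subseteq> ideal_gen (f ` {1..?n})"
    using final_bound[OF assms(1)] by blast
  have "fin_dim_quotient ?G"
    by (rule fin_dim_from[OF ideal_gen_ideal, of N]) (use N JG in blast)
  then show "system_of_parameters (stanley_reisner \<Delta>) f (d + 1)"
    unfolding system_of_parameters_def using hom by blast
qed

end
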